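(* Let $p,q$ be positive integers, $e>1$ an integer, $s$ a positive integer and $m$ a non-negative integer. If $$\tfrac12 G_{2^m s}\equiv 1\pmod{2^e}\quad\text{and}\quad \tfrac12 G_{2^m s}\not\equiv 1\pmod{2^{e+1}},$$ then for every positive integer $l$, $$\tfrac12 G_{2^{m+l}s}\equiv 1\pmod{2^{e+2l-1}},\quad \tfrac12 G_{2^{m+l}s}\equiv 1\pmod{2^{e+2l}},\quad \tfrac12 G_{2^{m+l}s}\not\equiv 1\pmod{2^{e+2l+1}}.$$
   Context: $A=pq+2$, $B=\sqrt{A^2-4}$, $G_n=\left(\frac{A+B}{2}\right)^n+\left(\frac{A-B}{2}\right)^n$ (an integer); congruences involving $\frac12 G_n$ require $\frac12G_n$ to be an integer. *)

theory Defs
  imports Complex_Main "HOL-Number_Theory.Cong"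
begin

definition A_par :: "int \<Rightarrow> int \<Rightarrow> int" where
  "A_par p q = p * q + 2"

definition B_par :: "int \<Rightarrow> int \<Rightarrow> real" where
  "B_par p q = sqrt ((real_of_int (A_par p q))\<^sup>2 - 4)"

definition G :: "int \<Rightarrow> int \<Rightarrow> nat \<Rightarrow> real" where
  "G p q n = ((real_of_int (A_par p q) + B_par p q) / 2) ^ n
           + ((real_of_int (A_par p q) - B_par p q) / 2) ^ n"

end

theory Submission
  imports Defs
begin

lemma sq_id: "((x::real)^n)^2 + (y^n)^2 = (x^n + y^n)^2 - 2 * (x*y)^n"
  by (simp add: power2_eq_square power_mult_distrib algebra_simps)

lemma G_double:
  assumes "p > 0" "q > 0"
  shows "G p q (2*n) = (G p q n)^2 - 2"
proof -
  define a where "a = real_of_int (A_par p q)"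
  define b where "b = B_par p q"
  have "p * q \<ge> 1" using mult_pos_pos[OF assms] by linarith
  hence a3: "a \<ge> 3" proof -
    have "real_of_int (p*q) \<ge> 1" using \<open>p*q \<ge> 1\<close> by linarith
    thus ?thesis unfolding a_def A_par_def by simp
  qed
  have "a*a \<ge> 3*3" using a3 by (intro mult_mono) auto
  hence "a^2 - 4 \<ge> 0" by (simp add: power2_eq_square)
  hence b2: "b^2 = a^2 - 4" unfolding b_def B_par_def a_def[symmetric] by simp
  have xy: "((a+b)/2) * ((a-b)/2) = 1"
    using b2 by (simp add: field_simps power2_eq_square)
  have "G p q (2*n) = (((a+b)/2)^n)^2 + (((a-b)/2)^n)^2"
    unfolding G_def a_def[symmetric] b_def[symmetric] by (simp add: power_mult mult.commute[of 2 n])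
  also have "\<dots> = (((a+b)/2)^n + ((a-b)/2)^n)^2 - 2 * (((a+b)/2) * ((a-b)/2))^n"
    using sq_id[of "(a+b)/2" n "(a-b)/2"] .
  also have "\<dots> = (G p q n)^2 - 2"
    unfolding xy G_def a_def[symmetric] b_def[symmetric] by simp
  finally show ?thesis .
qed

lemma step:
  assumes "p > 0" "q > 0" "E \<ge> 2"
    and "G p q n / 2 = real_of_int k" "k = 1 + 2^E * u" "odd u"
  shows "\<exists>k' u'. G p q (2*n) / 2 = real_of_int k' \<and> k' = 1 + 2^(E+2) * u' \<and> odd u'"
proof -
  have g: "G p q n = 2 * real_of_int k" using assms(4) by simp
  have "G p q (2*n) / 2 = real_of_int (2*k^2 - 1)"
    using G_double[OF assms(1,2)] g by (simp add: power2_eq_square)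
  moreover have "2*k^2 - 1 = 1 + 2^(E+2) * (u + 2^(E-1)*u^2)"
  proof -
    have ee: "E+E+1 = (E+2)+(E-1)" using assms(3) by simp
    have "(2::int)^(E+E+1) = 2^(E+2) * 2^(E-1)"
      unfolding ee power_add ..
    thus ?thesis using assms(5) by (simp add: power2_eq_square power_add algebra_simps)
  qed
  moreover have "odd (u + 2^(E-1)*u^2)"
    using assms(3,6) by simp
  ultimately show ?thesis by blast
qed

theorem lemma4:
  fixes p q :: int and e s m :: nat
  assumes "p > 0" and "q > 0" and "e > 1" and "s > 0"
    and "\<exists>k::int. G p q (2^m * s) / 2 = real_of_int k
           \<and> [k = 1] (mod 2^e) \<and> \<not> [k = 1] (mod 2^(e+1))"
  shows "\<forall>l::nat. l > 0 \<longrightarrow>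
           (\<exists>k::int. G p q (2^(m+l) * s) / 2 = real_of_int k
              \<and> [k = 1] (mod 2^(e+2*l-1))
              \<and> [k = 1] (mod 2^(e+2*l))
              \<and> \<not> [k = 1] (mod 2^(e+2*l+1)))"
proof -
  obtain k0 where k0: "G p q (2^m * s) / 2 = real_of_int k0" "[k0 = 1] (mod 2^e)"
    "\<not> [k0 = 1] (mod 2^(e+1))" using assms(5) by blast
  obtain u0 where u0: "k0 - 1 = 2^e * u0" using k0(2) by (auto simp: cong_iff_dvd_diff)
  have "odd u0"
  proof
    assume "even u0"
    then obtain v where "u0 = 2*v" by auto
    hence "k0 - 1 = 2^(e+1) * v" using u0 by simp
    thus False using k0(3) by (simp add: cong_iff_dvd_diff)
  qed
  have main: "\<exists>k u. G p q (2^(m+l) * s) / 2 = real_of_int k \<and> k = 1 + 2^(e+2*l) * u \<and> odd u" for l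
  proof (induction l)
    case 0
    show ?case using k0(1) u0 \<open>odd u0\<close> by (intro exI[of _ k0] exI[of _ u0]) auto
  next
    case (Suc l)
    then obtain k u where ku: "G p q (2^(m+l) * s) / 2 = real_of_int k" "k = 1 + 2^(e+2*l) * u" "odd u"
      by blast
    have "e + 2*l \<ge> 2" using assms(3) by simp
    from step[OF assms(1,2) this ku] obtain k' u' where
      "G p q (2*(2^(m+l) * s)) / 2 = real_of_int k'" "k' = 1 + 2^(e+2*l+2) * u'" "odd u'" by blast
    moreover have "2*(2^(m+l) * s) = 2^(m+Suc l) * s" by simp
    moreover have "e + 2*l + 2 = e + 2 * Suc l" by simp
    ultimately show ?case by metis
  qed
  show ?thesis
  proof (intro allI impI)
    fix l :: nat assume "l > 0"
    obtain k u where ku: "G p q (2^(m+l) * s) / 2 = real_of_int k" "k = 1 + 2^(e+2*l) * u" "odd u"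
      using main by blast
    have c2: "[k = 1] (mod 2^(e+2*l))" using ku(2) by (simp add: cong_iff_dvd_diff)
    have c1: "[k = 1] (mod 2^(e+2*l-1))"
    proof -
      have "(2::int)^(e+2*l-1) dvd 2^(e+2*l)" by (rule le_imp_power_dvd) simp
      thus ?thesis using c2 by (meson cong_iff_dvd_diff dvd_trans)
    qed
    have c3: "\<not> [k = 1] (mod 2^(e+2*l+1))"
    proof
      assume "[k = 1] (mod 2^(e+2*l+1))"
      hence "2^(e+2*l) * 2 dvd 2^(e+2*l) * (u::int)" using ku(2) by (simp add: cong_iff_dvd_diff)
      hence "2 dvd u" by (subst (asm) dvd_times_left_cancel_iff) auto
      thus False using ku(3) by simp
    qed
    show "\<exists>k::int. G p q (2^(m+l) * s) / 2 = real_of_int k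
              \<and> [k = 1] (mod 2^(e+2*l-1))
              \<and> [k = 1] (mod 2^(e+2*l))
              \<and> \<not> [k = 1] (mod 2^(e+2*l+1))" using ku(1) c1 c2 c3 by blast
  qed
qed

end
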